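(* Let $F$ be a contravariant functor from the category of unital $C^*$-algebras to the category of sets whose restriction to the full subcategory of commutative unital $C^*$-algebras is isomorphic to $\operatorname{Gelf}$. Then for every unital $C^*$-algebra $A$ and every integer $n\geq 3$, $F(\mathrm{M}_n(A))=\varnothing$.
   Context: Morphisms of unital $C^*$-algebras are identity-preserving $*$-homomorphisms. $\operatorname{Gelf}(A)$ is the set of maximal ideals of a commutative unital $C^*$-algebra $A$, with a morphism $f$ sent to $M\mapsto f^{-1}(M)$. $\mathrm{M}_n(A)$ is the $C^*$-algebra of $n\times n$ matrices over $A$. *)

theory Defs
  imports Complex_Main "HOL-Library.FuncSet"
begin

record 'a cstar =
  ca_carrier :: "'a set"
  ca_add :: "'a \<Rightarrow> 'a \<Rightarrow> 'a"
  ca_mul :: "'a \<Rightarrow> 'a \<Rightarrow> 'a"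
  ca_scale :: "complex \<Rightarrow> 'a \<Rightarrow> 'a"
  ca_star :: "'a \<Rightarrow> 'a"
  ca_norm :: "'a \<Rightarrow> real"
  ca_zero :: "'a"
  ca_one :: "'a"

definition ca_diff :: "'a cstar \<Rightarrow> 'a \<Rightarrow> 'a \<Rightarrow> 'a" where
  "ca_diff A x y = ca_add A x (ca_scale A (-1) y)"

definition unital_cstar_algebra :: "'a cstar \<Rightarrow> bool" where
  "unital_cstar_algebra A \<longleftrightarrow>
    ca_zero A \<in> ca_carrier A \<and> ca_one A \<in> ca_carrier A \<and>
    (\<forall>x\<in>ca_carrier A. \<forall>y\<in>ca_carrier A.
        ca_add A x y \<in> ca_carrier A \<and> ca_mul A x y \<in> ca_carrier A) \<and>
    (\<forall>c. \<forall>x\<in>ca_carrier A. ca_scale A c x \<in> ca_carrier A) \<and>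
    (\<forall>x\<in>ca_carrier A. ca_star A x \<in> ca_carrier A) \<and>
    \<comment> \<open>complex vector space\<close>
    (\<forall>x\<in>ca_carrier A. \<forall>y\<in>ca_carrier A. \<forall>z\<in>ca_carrier A.
        ca_add A (ca_add A x y) z = ca_add A x (ca_add A y z)) \<and>
    (\<forall>x\<in>ca_carrier A. \<forall>y\<in>ca_carrier A. ca_add A x y = ca_add A y x) \<and>
    (\<forall>x\<in>ca_carrier A. ca_add A (ca_zero A) x = x) \<and>
    (\<forall>x\<in>ca_carrier A. ca_add A x (ca_scale A (-1) x) = ca_zero A) \<and>
    (\<forall>x\<in>ca_carrier A. ca_scale A 1 x = x) \<and>
    (\<forall>a b. \<forall>x\<in>ca_carrier A. ca_scale A (a * b) x = ca_scale A a (ca_scale A b x)) \<and>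
    (\<forall>a b. \<forall>x\<in>ca_carrier A. ca_scale A (a + b) x = ca_add A (ca_scale A a x) (ca_scale A b x)) \<and>
    (\<forall>a. \<forall>x\<in>ca_carrier A. \<forall>y\<in>ca_carrier A.
        ca_scale A a (ca_add A x y) = ca_add A (ca_scale A a x) (ca_scale A a y)) \<and>
    \<comment> \<open>unital associative algebra\<close>
    (\<forall>x\<in>ca_carrier A. \<forall>y\<in>ca_carrier A. \<forall>z\<in>ca_carrier A.
        ca_mul A (ca_mul A x y) z = ca_mul A x (ca_mul A y z) \<and>
        ca_mul A x (ca_add A y z) = ca_add A (ca_mul A x y) (ca_mul A x z) \<and>
        ca_mul A (ca_add A x y) z = ca_add A (ca_mul A x z) (ca_mul A y z)) \<and>
    (\<forall>c. \<forall>x\<in>ca_carrier A. \<forall>y\<in>ca_carrier A.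
        ca_scale A c (ca_mul A x y) = ca_mul A (ca_scale A c x) y \<and>
        ca_scale A c (ca_mul A x y) = ca_mul A x (ca_scale A c y)) \<and>
    (\<forall>x\<in>ca_carrier A. ca_mul A (ca_one A) x = x \<and> ca_mul A x (ca_one A) = x) \<and>
    \<comment> \<open>involution\<close>
    (\<forall>x\<in>ca_carrier A. ca_star A (ca_star A x) = x) \<and>
    (\<forall>x\<in>ca_carrier A. \<forall>y\<in>ca_carrier A.
        ca_star A (ca_add A x y) = ca_add A (ca_star A x) (ca_star A y) \<and>
        ca_star A (ca_mul A x y) = ca_mul A (ca_star A y) (ca_star A x)) \<and>
    (\<forall>c. \<forall>x\<in>ca_carrier A. ca_star A (ca_scale A c x) = ca_scale A (cnj c) (ca_star A x)) \<and>
    \<comment> \<open>submultiplicative norm with the C*-identity\<close>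
    (\<forall>x\<in>ca_carrier A. 0 \<le> ca_norm A x \<and> (ca_norm A x = 0 \<longleftrightarrow> x = ca_zero A)) \<and>
    (\<forall>x\<in>ca_carrier A. \<forall>y\<in>ca_carrier A.
        ca_norm A (ca_add A x y) \<le> ca_norm A x + ca_norm A y \<and>
        ca_norm A (ca_mul A x y) \<le> ca_norm A x * ca_norm A y) \<and>
    (\<forall>c. \<forall>x\<in>ca_carrier A. ca_norm A (ca_scale A c x) = cmod c * ca_norm A x) \<and>
    (\<forall>x\<in>ca_carrier A. ca_norm A (ca_mul A (ca_star A x) x) = (ca_norm A x)\<^sup>2) \<and>
    \<comment> \<open>completeness\<close>
    (\<forall>s::nat \<Rightarrow> 'a. (\<forall>k. s k \<in> ca_carrier A) \<and>
         (\<forall>e>0. \<exists>N. \<forall>m\<ge>N. \<forall>k\<ge>N. ca_norm A (ca_diff A (s m) (s k)) < e) \<longrightarrow>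
         (\<exists>x\<in>ca_carrier A. \<forall>e>0. \<exists>N. \<forall>k\<ge>N. ca_norm A (ca_diff A (s k) x) < e))"

definition commutative_cstar :: "'a cstar \<Rightarrow> bool" where
  "commutative_cstar A \<longleftrightarrow> unital_cstar_algebra A \<and>
     (\<forall>x\<in>ca_carrier A. \<forall>y\<in>ca_carrier A. ca_mul A x y = ca_mul A y x)"

definition cstar_hom :: "'a cstar \<Rightarrow> 'b cstar \<Rightarrow> ('a \<Rightarrow> 'b) \<Rightarrow> bool" where
  "cstar_hom A B f \<longleftrightarrow>
     f \<in> ca_carrier A \<rightarrow> ca_carrier B \<and>
     (\<forall>x\<in>ca_carrier A. \<forall>y\<in>ca_carrier A.
        f (ca_add A x y) = ca_add B (f x) (f y) \<and> f (ca_mul A x y) = ca_mul B (f x) (f y)) \<and>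
     (\<forall>c. \<forall>x\<in>ca_carrier A. f (ca_scale A c x) = ca_scale B c (f x)) \<and>
     (\<forall>x\<in>ca_carrier A. f (ca_star A x) = ca_star B (f x)) \<and>
     f (ca_one A) = ca_one B"

text \<open>Morphisms of the category: homomorphisms, made extensional (undefined off the carrier)
  so that a morphism is determined by its values on the carrier.\<close>

definition cstar_mor :: "'a cstar \<Rightarrow> 'b cstar \<Rightarrow> ('a \<Rightarrow> 'b) \<Rightarrow> bool" where
  "cstar_mor A B f \<longleftrightarrow> cstar_hom A B f \<and> f \<in> extensional (ca_carrier A)"

definition cstar_isomorphic :: "'a cstar \<Rightarrow> 'b cstar \<Rightarrow> bool" where
  "cstar_isomorphic A B \<longleftrightarrow>
     (\<exists>f. cstar_hom A B f \<and> bij_betw f (ca_carrier A) (ca_carrier B))"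

definition contravariant_functor ::
  "('u cstar \<Rightarrow> 'v set) \<Rightarrow> (('u \<Rightarrow> 'u) \<Rightarrow> 'u cstar \<Rightarrow> 'u cstar \<Rightarrow> 'v \<Rightarrow> 'v) \<Rightarrow> bool" where
  "contravariant_functor F Fmor \<longleftrightarrow>
     (\<forall>A B f. unital_cstar_algebra A \<and> unital_cstar_algebra B \<and> cstar_mor A B f \<longrightarrow>
        Fmor f A B \<in> F B \<rightarrow> F A) \<and>
     (\<forall>A. unital_cstar_algebra A \<longrightarrow>
        (\<forall>x\<in>F A. Fmor (restrict id (ca_carrier A)) A A x = x)) \<and>
     (\<forall>A B C f g. unital_cstar_algebra A \<and> unital_cstar_algebra B \<and> unital_cstar_algebra C \<and>
        cstar_mor A B f \<and> cstar_mor B C g \<longrightarrow>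
        (\<forall>x\<in>F C. Fmor (compose (ca_carrier A) g f) A C x = Fmor f A B (Fmor g B C x)))"

definition cstar_ideal :: "'a cstar \<Rightarrow> 'a set \<Rightarrow> bool" where
  "cstar_ideal A I \<longleftrightarrow> I \<subseteq> ca_carrier A \<and> ca_zero A \<in> I \<and>
     (\<forall>x\<in>I. \<forall>y\<in>I. ca_add A x y \<in> I) \<and>
     (\<forall>x\<in>I. ca_scale A (-1) x \<in> I) \<and>
     (\<forall>x\<in>I. \<forall>a\<in>ca_carrier A. ca_mul A a x \<in> I \<and> ca_mul A x a \<in> I)"

definition maximal_ideal :: "'a cstar \<Rightarrow> 'a set \<Rightarrow> bool" where
  "maximal_ideal A M \<longleftrightarrow> cstar_ideal A M \<and> M \<noteq> ca_carrier A \<and>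
     (\<forall>J. cstar_ideal A J \<and> M \<subseteq> J \<and> J \<noteq> ca_carrier A \<longrightarrow> J = M)"

definition Gelf :: "'a cstar \<Rightarrow> 'a set set" where
  "Gelf A = {M. maximal_ideal A M}"

definition Gelf_mor :: "('a \<Rightarrow> 'b) \<Rightarrow> 'a cstar \<Rightarrow> 'b set \<Rightarrow> 'a set" where
  "Gelf_mor f A M = {x \<in> ca_carrier A. f x \<in> M}"

definition gelf_nat_iso ::
  "('u cstar \<Rightarrow> 'v set) \<Rightarrow> (('u \<Rightarrow> 'u) \<Rightarrow> 'u cstar \<Rightarrow> 'u cstar \<Rightarrow> 'v \<Rightarrow> 'v)
     \<Rightarrow> ('u cstar \<Rightarrow> 'v \<Rightarrow> 'u set) \<Rightarrow> bool" where
  "gelf_nat_iso F Fmor \<eta> \<longleftrightarrow>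
     (\<forall>A. commutative_cstar A \<longrightarrow> bij_betw (\<eta> A) (F A) (Gelf A)) \<and>
     (\<forall>A B f. commutative_cstar A \<and> commutative_cstar B \<and> cstar_mor A B f \<longrightarrow>
        (\<forall>x\<in>F B. \<eta> A (Fmor f A B x) = Gelf_mor f A (\<eta> B x)))"

fun ca_sum :: "'a cstar \<Rightarrow> (nat \<Rightarrow> 'a) \<Rightarrow> nat \<Rightarrow> 'a" where
  "ca_sum A f 0 = ca_zero A"
| "ca_sum A f (Suc k) = ca_add A (ca_sum A f k) (f k)"

text \<open>Vectors in the Hilbert A-module A^n, with A-valued inner product.\<close>

definition mod_vecs :: "'a cstar \<Rightarrow> nat \<Rightarrow> (nat \<Rightarrow> 'a) set" where
  "mod_vecs A n = {v. \<forall>i<n. v i \<in> ca_carrier A}"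

definition mod_inner :: "'a cstar \<Rightarrow> nat \<Rightarrow> (nat \<Rightarrow> 'a) \<Rightarrow> (nat \<Rightarrow> 'a) \<Rightarrow> 'a" where
  "mod_inner A n v w = ca_sum A (\<lambda>i. ca_mul A (ca_star A (v i)) (w i)) n"

definition mat_apply :: "'a cstar \<Rightarrow> nat \<Rightarrow> (nat \<Rightarrow> nat \<Rightarrow> 'a) \<Rightarrow> (nat \<Rightarrow> 'a) \<Rightarrow> nat \<Rightarrow> 'a" where
  "mat_apply A n M v = (\<lambda>i. ca_sum A (\<lambda>k. ca_mul A (M i k) (v k)) n)"

definition mat_cstar :: "'a cstar \<Rightarrow> nat \<Rightarrow> (nat \<Rightarrow> nat \<Rightarrow> 'a) cstar" where
  "mat_cstar A n =
    \<lparr> ca_carrier = {M. (\<forall>i<n. \<forall>j<n. M i j \<in> ca_carrier A) \<and>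
                        (\<forall>i j. \<not> (i < n \<and> j < n) \<longrightarrow> M i j = ca_zero A)},
      ca_add = (\<lambda>M N i j. if i < n \<and> j < n then ca_add A (M i j) (N i j) else ca_zero A),
      ca_mul = (\<lambda>M N i j. if i < n \<and> j < n
                  then ca_sum A (\<lambda>k. ca_mul A (M i k) (N k j)) n else ca_zero A),
      ca_scale = (\<lambda>c M i j. if i < n \<and> j < n then ca_scale A c (M i j) else ca_zero A),
      ca_star = (\<lambda>M i j. if i < n \<and> j < n then ca_star A (M j i) else ca_zero A),
      ca_norm = (\<lambda>M. sqrt (Sup {ca_norm A (mod_inner A n (mat_apply A n M v) (mat_apply A n M v)) | v.
                        v \<in> mod_vecs A n \<and> ca_norm A (mod_inner A n v v) \<le> 1})),
      ca_zero = (\<lambda>i j. ca_zero A),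
      ca_one = (\<lambda>i j. if i < n \<and> j < n then (if i = j then ca_one A else ca_zero A) else ca_zero A) \<rparr>"

end

theory Submission
  imports Defs
begin


locale ucs =
  fixes A :: "'a cstar"
  assumes ucsA: "unital_cstar_algebra A"
begin

abbreviation "CA \<equiv> ca_carrier A"
abbreviation ad (infixl "\<oplus>" 65) where "ad \<equiv> ca_add A"
abbreviation mu (infixl "\<otimes>" 70) where "mu \<equiv> ca_mul A"
abbreviation "sc \<equiv> ca_scale A"
abbreviation "st \<equiv> ca_star A"
abbreviation "nm \<equiv> ca_norm A"
abbreviation "z0 \<equiv> ca_zero A"
abbreviation "e1 \<equiv> ca_one A"
abbreviation "ng x \<equiv> sc (-1) x"

lemmas ax = ucsA[unfolded unital_cstar_algebra_def]
lemmas c1 = ax[THEN conjunct1]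
lemmas c2 = ax[THEN conjunct2, THEN conjunct1]
lemmas c3 = ax[THEN conjunct2, THEN conjunct2, THEN conjunct1]
lemmas c4 = ax[THEN conjunct2, THEN conjunct2, THEN conjunct2, THEN conjunct1]
lemmas c5 = ax[THEN conjunct2, THEN conjunct2, THEN conjunct2, THEN conjunct2, THEN conjunct1]
lemmas c6 = ax[THEN conjunct2, THEN conjunct2, THEN conjunct2, THEN conjunct2, THEN conjunct2, THEN conjunct1]
lemmas c7 = ax[THEN conjunct2, THEN conjunct2, THEN conjunct2, THEN conjunct2, THEN conjunct2, THEN conjunct2, THEN conjunct1]
lemmas c8 = ax[THEN conjunct2, THEN conjunct2, THEN conjunct2, THEN conjunct2, THEN conjunct2, THEN conjunct2, THEN conjunct2, THEN conjunct1]
lemmas c9 = ax[THEN conjunct2, THEN conjunct2, THEN conjunct2, THEN conjunct2, THEN conjunct2, THEN conjunct2, THEN conjunct2, THEN conjunct2, THEN conjunct1]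
lemmas c10 = ax[THEN conjunct2, THEN conjunct2, THEN conjunct2, THEN conjunct2, THEN conjunct2, THEN conjunct2, THEN conjunct2, THEN conjunct2, THEN conjunct2, THEN conjunct1]
lemmas c11 = ax[THEN conjunct2, THEN conjunct2, THEN conjunct2, THEN conjunct2, THEN conjunct2, THEN conjunct2, THEN conjunct2, THEN conjunct2, THEN conjunct2, THEN conjunct2, THEN conjunct1]
lemmas c12 = ax[THEN conjunct2, THEN conjunct2, THEN conjunct2, THEN conjunct2, THEN conjunct2, THEN conjunct2, THEN conjunct2, THEN conjunct2, THEN conjunct2, THEN conjunct2, THEN conjunct2, THEN conjunct1]
lemmas c13 = ax[THEN conjunct2, THEN conjunct2, THEN conjunct2, THEN conjunct2, THEN conjunct2, THEN conjunct2, THEN conjunct2, THEN conjunct2, THEN conjunct2, THEN conjunct2, THEN conjunct2, THEN conjunct2, THEN conjunct1]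
lemmas c14 = ax[THEN conjunct2, THEN conjunct2, THEN conjunct2, THEN conjunct2, THEN conjunct2, THEN conjunct2, THEN conjunct2, THEN conjunct2, THEN conjunct2, THEN conjunct2, THEN conjunct2, THEN conjunct2, THEN conjunct2, THEN conjunct1]
lemmas c15 = ax[THEN conjunct2, THEN conjunct2, THEN conjunct2, THEN conjunct2, THEN conjunct2, THEN conjunct2, THEN conjunct2, THEN conjunct2, THEN conjunct2, THEN conjunct2, THEN conjunct2, THEN conjunct2, THEN conjunct2, THEN conjunct2, THEN conjunct1]
lemmas c16 = ax[THEN conjunct2, THEN conjunct2, THEN conjunct2, THEN conjunct2, THEN conjunct2, THEN conjunct2, THEN conjunct2, THEN conjunct2, THEN conjunct2, THEN conjunct2, THEN conjunct2, THEN conjunct2, THEN conjunct2, THEN conjunct2, THEN conjunct2, THEN conjunct1]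
lemmas c17 = ax[THEN conjunct2, THEN conjunct2, THEN conjunct2, THEN conjunct2, THEN conjunct2, THEN conjunct2, THEN conjunct2, THEN conjunct2, THEN conjunct2, THEN conjunct2, THEN conjunct2, THEN conjunct2, THEN conjunct2, THEN conjunct2, THEN conjunct2, THEN conjunct2, THEN conjunct1]
lemmas c18 = ax[THEN conjunct2, THEN conjunct2, THEN conjunct2, THEN conjunct2, THEN conjunct2, THEN conjunct2, THEN conjunct2, THEN conjunct2, THEN conjunct2, THEN conjunct2, THEN conjunct2, THEN conjunct2, THEN conjunct2, THEN conjunct2, THEN conjunct2, THEN conjunct2, THEN conjunct2, THEN conjunct1]
lemmas c19 = ax[THEN conjunct2, THEN conjunct2, THEN conjunct2, THEN conjunct2, THEN conjunct2, THEN conjunct2, THEN conjunct2, THEN conjunct2, THEN conjunct2, THEN conjunct2, THEN conjunct2, THEN conjunct2, THEN conjunct2, THEN conjunct2, THEN conjunct2, THEN conjunct2, THEN conjunct2, THEN conjunct2, THEN conjunct1]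
lemmas c20 = ax[THEN conjunct2, THEN conjunct2, THEN conjunct2, THEN conjunct2, THEN conjunct2, THEN conjunct2, THEN conjunct2, THEN conjunct2, THEN conjunct2, THEN conjunct2, THEN conjunct2, THEN conjunct2, THEN conjunct2, THEN conjunct2, THEN conjunct2, THEN conjunct2, THEN conjunct2, THEN conjunct2, THEN conjunct2, THEN conjunct1]
lemmas c21 = ax[THEN conjunct2, THEN conjunct2, THEN conjunct2, THEN conjunct2, THEN conjunct2, THEN conjunct2, THEN conjunct2, THEN conjunct2, THEN conjunct2, THEN conjunct2, THEN conjunct2, THEN conjunct2, THEN conjunct2, THEN conjunct2, THEN conjunct2, THEN conjunct2, THEN conjunct2, THEN conjunct2, THEN conjunct2, THEN conjunct2, THEN conjunct1]
lemmas c22 = ax[THEN conjunct2, THEN conjunct2, THEN conjunct2, THEN conjunct2, THEN conjunct2, THEN conjunct2, THEN conjunct2, THEN conjunct2, THEN conjunct2, THEN conjunct2, THEN conjunct2, THEN conjunct2, THEN conjunct2, THEN conjunct2, THEN conjunct2, THEN conjunct2, THEN conjunct2, THEN conjunct2, THEN conjunct2, THEN conjunct2, THEN conjunct2, THEN conjunct1]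
lemmas c23 = ax[THEN conjunct2, THEN conjunct2, THEN conjunct2, THEN conjunct2, THEN conjunct2, THEN conjunct2, THEN conjunct2, THEN conjunct2, THEN conjunct2, THEN conjunct2, THEN conjunct2, THEN conjunct2, THEN conjunct2, THEN conjunct2, THEN conjunct2, THEN conjunct2, THEN conjunct2, THEN conjunct2, THEN conjunct2, THEN conjunct2, THEN conjunct2, THEN conjunct2, THEN conjunct1]
lemmas c24 = ax[THEN conjunct2, THEN conjunct2, THEN conjunct2, THEN conjunct2, THEN conjunct2, THEN conjunct2, THEN conjunct2, THEN conjunct2, THEN conjunct2, THEN conjunct2, THEN conjunct2, THEN conjunct2, THEN conjunct2, THEN conjunct2, THEN conjunct2, THEN conjunct2, THEN conjunct2, THEN conjunct2, THEN conjunct2, THEN conjunct2, THEN conjunct2, THEN conjunct2, THEN conjunct2]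

lemma zero_in[simp]: "z0 \<in> CA" using c1 by blast
lemma one_in[simp]: "e1 \<in> CA" using c2 by blast
lemma add_in[simp]: "x \<in> CA \<Longrightarrow> y \<in> CA \<Longrightarrow> x \<oplus> y \<in> CA" using c3 by blast
lemma mul_in[simp]: "x \<in> CA \<Longrightarrow> y \<in> CA \<Longrightarrow> x \<otimes> y \<in> CA" using c3 by blast
lemma sc_in[simp]: "x \<in> CA \<Longrightarrow> sc c x \<in> CA" using c4 by blast
lemma st_in[simp]: "x \<in> CA \<Longrightarrow> st x \<in> CA" using c5 by blast
lemma add_assoc: "x \<in> CA \<Longrightarrow> y \<in> CA \<Longrightarrow> z \<in> CA \<Longrightarrow> x \<oplus> y \<oplus> z = x \<oplus> (y \<oplus> z)" using c6 by blast
lemma add_comm: "x \<in> CA \<Longrightarrow> y \<in> CA \<Longrightarrow> x \<oplus> y = y \<oplus> x" using c7 by blast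
lemma add_lcomm: "x \<in> CA \<Longrightarrow> y \<in> CA \<Longrightarrow> z \<in> CA \<Longrightarrow> x \<oplus> (y \<oplus> z) = y \<oplus> (x \<oplus> z)"
proof -
  assume h: "x \<in> CA" "y \<in> CA" "z \<in> CA"
  have "x \<oplus> (y \<oplus> z) = (x \<oplus> y) \<oplus> z" using h by (simp add: add_assoc)
  also have "\<dots> = (y \<oplus> x) \<oplus> z" using h add_comm[of x y] by simp
  also have "\<dots> = y \<oplus> (x \<oplus> z)" using h by (simp add: add_assoc)
  finally show ?thesis .
qed
lemmas add_ac = add_assoc add_comm add_lcomm
lemma add_0_left[simp]: "x \<in> CA \<Longrightarrow> z0 \<oplus> x = x" using c8 by blast
lemma add_0_right[simp]: "x \<in> CA \<Longrightarrow> x \<oplus> z0 = x" using add_comm[of x z0] by simp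
lemma add_neg[simp]: "x \<in> CA \<Longrightarrow> x \<oplus> ng x = z0" using c9 by blast
lemma neg_add[simp]: "x \<in> CA \<Longrightarrow> ng x \<oplus> x = z0" using add_comm add_neg by simp
lemma sc_one[simp]: "x \<in> CA \<Longrightarrow> sc 1 x = x" using c10 by blast
lemma sc_mult: "x \<in> CA \<Longrightarrow> sc (a * b) x = sc a (sc b x)" using c11 by blast
lemma sc_plus: "x \<in> CA \<Longrightarrow> sc (a + b) x = sc a x \<oplus> sc b x" using c12 by blast
lemma sc_add: "x \<in> CA \<Longrightarrow> y \<in> CA \<Longrightarrow> sc a (x \<oplus> y) = sc a x \<oplus> sc a y" using c13 by blast
lemma mul_assoc: "x \<in> CA \<Longrightarrow> y \<in> CA \<Longrightarrow> z \<in> CA \<Longrightarrow> x \<otimes> y \<otimes> z = x \<otimes> (y \<otimes> z)" using c14 by blast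
lemma distl: "x \<in> CA \<Longrightarrow> y \<in> CA \<Longrightarrow> z \<in> CA \<Longrightarrow> x \<otimes> (y \<oplus> z) = x \<otimes> y \<oplus> x \<otimes> z" using c14 by blast
lemma distr: "x \<in> CA \<Longrightarrow> y \<in> CA \<Longrightarrow> z \<in> CA \<Longrightarrow> (x \<oplus> y) \<otimes> z = x \<otimes> z \<oplus> y \<otimes> z" using c14 by blast
lemma sc_mul_both: "x \<in> CA \<Longrightarrow> y \<in> CA \<Longrightarrow> sc c (x \<otimes> y) = sc c x \<otimes> y \<and> sc c (x \<otimes> y) = x \<otimes> sc c y" using c15 by blast
lemma sc_mul_l: "x \<in> CA \<Longrightarrow> y \<in> CA \<Longrightarrow> sc c x \<otimes> y = sc c (x \<otimes> y)" using sc_mul_both by metis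
lemma sc_mul_r: "x \<in> CA \<Longrightarrow> y \<in> CA \<Longrightarrow> x \<otimes> sc c y = sc c (x \<otimes> y)" using sc_mul_both by metis
lemma one_mul[simp]: "x \<in> CA \<Longrightarrow> e1 \<otimes> x = x" using c16 by blast
lemma mul_one[simp]: "x \<in> CA \<Longrightarrow> x \<otimes> e1 = x" using c16 by blast
lemma st_st[simp]: "x \<in> CA \<Longrightarrow> st (st x) = x" using c17 by blast
lemma st_add: "x \<in> CA \<Longrightarrow> y \<in> CA \<Longrightarrow> st (x \<oplus> y) = st x \<oplus> st y" using c18 by blast
lemma st_mul: "x \<in> CA \<Longrightarrow> y \<in> CA \<Longrightarrow> st (x \<otimes> y) = st y \<otimes> st x" using c18 by blast
lemma st_sc: "x \<in> CA \<Longrightarrow> st (sc c x) = sc (cnj c) (st x)" using c19 by blast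
lemma nm_nonneg: "x \<in> CA \<Longrightarrow> 0 \<le> nm x" using c20 by blast
lemma nm_zero: "x \<in> CA \<Longrightarrow> nm x = 0 \<longleftrightarrow> x = z0" using c20 by blast
lemma nm_add: "x \<in> CA \<Longrightarrow> y \<in> CA \<Longrightarrow> nm (x \<oplus> y) \<le> nm x + nm y" using c21 by blast
lemma nm_mul: "x \<in> CA \<Longrightarrow> y \<in> CA \<Longrightarrow> nm (x \<otimes> y) \<le> nm x * nm y" using c21 by blast
lemma nm_sc: "x \<in> CA \<Longrightarrow> nm (sc c x) = cmod c * nm x" using c22 by blast
lemma complete:
  fixes s :: "nat \<Rightarrow> 'a"
  assumes "\<forall>k. s k \<in> CA" "\<forall>e>0. \<exists>N. \<forall>m\<ge>N. \<forall>k\<ge>N. nm (ca_diff A (s m) (s k)) < e"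
  shows "\<exists>x\<in>CA. \<forall>e>0. \<exists>N. \<forall>k\<ge>N. nm (ca_diff A (s k) x) < e"
  by (rule mp[OF c24[THEN spec[where x=s]] conjI[OF assms]])

lemma sc_zero[simp]: "x \<in> CA \<Longrightarrow> sc 0 x = z0"
  using sc_plus[of x 1 "-1"] by simp
lemma sc_z0[simp]: "sc c z0 = z0"
proof -
  have "sc c z0 = sc c (sc 0 z0)" by simp
  also have "\<dots> = sc (c * 0) z0" by (simp only: sc_mult zero_in)
  finally show ?thesis by simp
qed
lemma mul_zero[simp]: "x \<in> CA \<Longrightarrow> x \<otimes> z0 = z0"
proof -
  assume h: "x \<in> CA"
  have "x \<otimes> z0 = x \<otimes> sc 0 z0" by simp
  also have "\<dots> = sc 0 (x \<otimes> z0)" using h by (simp only: sc_mul_r zero_in)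
  also have "\<dots> = z0" using h by simp
  finally show ?thesis .
qed
lemma zero_mul[simp]: "x \<in> CA \<Longrightarrow> z0 \<otimes> x = z0"
proof -
  assume h: "x \<in> CA"
  have "z0 \<otimes> x = sc 0 z0 \<otimes> x" by simp
  also have "\<dots> = sc 0 (z0 \<otimes> x)" using h by (simp only: sc_mul_l zero_in)
  also have "\<dots> = z0" using h by simp
  finally show ?thesis .
qed
lemma ng_ng[simp]: "x \<in> CA \<Longrightarrow> ng (ng x) = x"
  by (simp add: sc_mult[symmetric])
lemma ng_add: "x \<in> CA \<Longrightarrow> y \<in> CA \<Longrightarrow> ng (x \<oplus> y) = ng x \<oplus> ng y" by (rule sc_add)
lemma ng_mul_l: "x \<in> CA \<Longrightarrow> y \<in> CA \<Longrightarrow> ng x \<otimes> y = ng (x \<otimes> y)" by (rule sc_mul_l)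
lemma ng_mul_r: "x \<in> CA \<Longrightarrow> y \<in> CA \<Longrightarrow> x \<otimes> ng y = ng (x \<otimes> y)" by (rule sc_mul_r)
lemma add_neg_eq0: "x \<in> CA \<Longrightarrow> y \<in> CA \<Longrightarrow> x \<oplus> ng y = z0 \<Longrightarrow> x = y"
proof -
  assume h: "x \<in> CA" "y \<in> CA" "x \<oplus> ng y = z0"
  have "x = x \<oplus> (ng y \<oplus> y)" using h by simp
  also have "\<dots> = (x \<oplus> ng y) \<oplus> y" using h(1,2) by (simp only: add_assoc sc_in)
  also have "\<dots> = z0 \<oplus> y" using h(3) by simp
  also have "\<dots> = y" using h by simp
  finally show ?thesis .
qed
lemma nm_ng: "x \<in> CA \<Longrightarrow> nm (ng x) = nm x" by (simp add: nm_sc)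
lemma st_one[simp]: "st e1 = e1"
proof -
  have "st e1 = st e1 \<otimes> e1" by simp
  also have "\<dots> = st e1 \<otimes> st (st e1)" by simp
  also have "\<dots> = st (st e1 \<otimes> e1)" by (simp only: st_mul st_in one_in)
  also have "\<dots> = e1" by simp
  finally show ?thesis .
qed
lemma sc_add_same: "sc a e1 \<oplus> sc b e1 = sc (a+b) e1" by (simp add: sc_plus)
lemma sc_mul_same: "sc a e1 \<otimes> sc b e1 = sc (a*b) e1"
proof -
  have "sc a e1 \<otimes> sc b e1 = sc a (e1 \<otimes> sc b e1)" by (simp add: sc_mul_l)
  also have "\<dots> = sc (a*b) e1" by (simp add: sc_mult)
  finally show ?thesis .
qed
lemma st_sc_one: "st (sc a e1) = sc (cnj a) e1" by (simp add: st_sc)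

lemma ca_sum_in[simp]: "(\<And>k. k < m \<Longrightarrow> f k \<in> CA) \<Longrightarrow> ca_sum A f m \<in> CA"
  by (induction m) auto
lemma ca_sum_cong: "(\<And>k. k < m \<Longrightarrow> f k = g k) \<Longrightarrow> ca_sum A f m = ca_sum A g m"
  by (induction m) auto
lemma ca_sum_sc: "ca_sum A (\<lambda>k. sc (c k) e1) m = sc (\<Sum>k<m. c k) e1"
  by (induction m) (auto simp: sc_add_same)

end



definition comm :: "'a cstar \<Rightarrow> 'a set \<Rightarrow> 'a set" where
  "comm A S = {y \<in> ca_carrier A. \<forall>s\<in>S. ca_mul A s y = ca_mul A y s}"

definition bicomm :: "'a cstar \<Rightarrow> 'a set \<Rightarrow> 'a set" where
  "bicomm A S = comm A (comm A S)"

context ucs begin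

lemma add_swap: "a \<in> CA \<Longrightarrow> b \<in> CA \<Longrightarrow> c \<in> CA \<Longrightarrow> d \<in> CA \<Longrightarrow>
   (a \<oplus> b) \<oplus> (c \<oplus> d) = (a \<oplus> c) \<oplus> (b \<oplus> d)"
  by (simp add: add_assoc add_lcomm[of b c d])

lemma upd_simps: "ca_carrier (A\<lparr>ca_carrier := T\<rparr>) = T" "ca_add (A\<lparr>ca_carrier := T\<rparr>) = ca_add A"
  "ca_mul (A\<lparr>ca_carrier := T\<rparr>) = ca_mul A" "ca_scale (A\<lparr>ca_carrier := T\<rparr>) = ca_scale A"
  "ca_star (A\<lparr>ca_carrier := T\<rparr>) = ca_star A" "ca_norm (A\<lparr>ca_carrier := T\<rparr>) = ca_norm A"
  "ca_zero (A\<lparr>ca_carrier := T\<rparr>) = ca_zero A" "ca_one (A\<lparr>ca_carrier := T\<rparr>) = ca_one A"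
  by simp_all

lemma sub_ucs:
  assumes T: "T \<subseteq> CA" "z0 \<in> T" "e1 \<in> T"
    "\<And>x y. x\<in>T \<Longrightarrow> y\<in>T \<Longrightarrow> x \<oplus> y \<in> T"
    "\<And>x y. x\<in>T \<Longrightarrow> y\<in>T \<Longrightarrow> x \<otimes> y \<in> T"
    "\<And>c x. x\<in>T \<Longrightarrow> sc c x \<in> T" "\<And>x. x \<in> T \<Longrightarrow> st x \<in> T"
  and cl: "\<And>(s::nat\<Rightarrow>'a) x. \<forall>k. s k \<in> T \<Longrightarrow> x \<in> CA \<Longrightarrow> \<forall>e>0. \<exists>N. \<forall>k\<ge>N. nm (ca_diff A (s k) x) < e \<Longrightarrow> x \<in> T"
  shows "unital_cstar_algebra (A\<lparr>ca_carrier := T\<rparr>)"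
proof -
  have sub: "\<And>x. x \<in> T \<Longrightarrow> x \<in> CA" using T(1) by blast
  have compl: "\<exists>x\<in>T. \<forall>e>0. \<exists>N. \<forall>k\<ge>N. nm (ca_diff A (s k) x) < e"
    if s: "\<forall>k. s k \<in> T" and cau: "\<forall>e>0. \<exists>N. \<forall>m\<ge>N. \<forall>k\<ge>N. nm (ca_diff A (s m) (s k)) < e"
    for s :: "nat \<Rightarrow> 'a"
  proof -
    have "\<forall>k. s k \<in> CA" using s sub by blast
    from complete[OF this cau] obtain x where x: "x \<in> CA" "\<forall>e>0. \<exists>N. \<forall>k\<ge>N. nm (ca_diff A (s k) x) < e" by blast
    with cl[OF s] show ?thesis by blast
  qed
  show ?thesis
    unfolding unital_cstar_algebra_def
    apply (simp only: upd_simps ca_diff_def)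
    apply (intro conjI)
    subgoal using T(2) .
    subgoal using T(3) .
    subgoal using T(4,5) by blast
    subgoal using T(6) by blast
    subgoal using T(7) by blast
    subgoal using sub by (simp add: add_assoc)
    subgoal using sub by (simp add: add_comm)
    subgoal using sub by simp
    subgoal using sub by simp
    subgoal using sub by simp
    subgoal using sub by (simp add: sc_mult)
    subgoal using sub by (simp add: sc_plus)
    subgoal using sub by (simp add: sc_add)
    subgoal using sub by (simp add: mul_assoc distl distr)
    subgoal using sub sc_mul_both by blast
    subgoal using sub by simp
    subgoal using sub by simp
    subgoal using sub by (simp add: st_add st_mul)
    subgoal using sub by (simp add: st_sc)
    subgoal using sub nm_nonneg nm_zero by blast
    subgoal using sub nm_add nm_mul by blast
    subgoal using sub by (simp add: nm_sc)
    subgoal using sub c23 by blast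
    subgoal using compl unfolding ca_diff_def by blast
    done
qed

lemma comm_sub: "comm A S \<subseteq> CA" unfolding comm_def by blast

lemma comm_closed:
  assumes S: "S \<subseteq> CA"
  shows "z0 \<in> comm A S" "e1 \<in> comm A S"
    "\<And>x y. x\<in>comm A S \<Longrightarrow> y\<in>comm A S \<Longrightarrow> x \<oplus> y \<in> comm A S"
    "\<And>x y. x\<in>comm A S \<Longrightarrow> y\<in>comm A S \<Longrightarrow> x \<otimes> y \<in> comm A S"
    "\<And>c x. x\<in>comm A S \<Longrightarrow> sc c x \<in> comm A S"
proof -
  have sub: "\<And>x. x \<in> S \<Longrightarrow> x \<in> CA" using S by blast
  show "z0 \<in> comm A S" "e1 \<in> comm A S" unfolding comm_def using sub by auto
  show "x \<oplus> y \<in> comm A S" if "x\<in>comm A S" "y\<in>comm A S" for x y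
    using that sub unfolding comm_def by (auto simp: distl distr)
  show "x \<otimes> y \<in> comm A S" if "x\<in>comm A S" "y\<in>comm A S" for x y
  proof -
    have "s \<otimes> (x \<otimes> y) = (x \<otimes> y) \<otimes> s" if s: "s \<in> S" for s
    proof -
      have xy: "x \<in> CA" "y \<in> CA" "s \<in> CA" "s \<otimes> x = x \<otimes> s" "s \<otimes> y = y \<otimes> s"
        using \<open>x\<in>comm A S\<close> \<open>y\<in>comm A S\<close> s sub unfolding comm_def by auto
      have "s \<otimes> (x \<otimes> y) = (s \<otimes> x) \<otimes> y" using xy(1-3) by (simp only: mul_assoc)
      also have "\<dots> = (x \<otimes> s) \<otimes> y" using xy(4) by simp
      also have "\<dots> = x \<otimes> (s \<otimes> y)" using xy(1-3) by (simp only: mul_assoc)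
      also have "\<dots> = x \<otimes> (y \<otimes> s)" using xy(5) by simp
      also have "\<dots> = (x \<otimes> y) \<otimes> s" using xy(1-3) by (simp only: mul_assoc)
      finally show ?thesis .
    qed
    thus ?thesis using that unfolding comm_def by auto
  qed
  show "sc c x \<in> comm A S" if "x\<in>comm A S" for c x
    using that sub unfolding comm_def by (auto simp: sc_mul_l sc_mul_r)
qed

lemma comm_star:
  assumes S: "S \<subseteq> CA" and Sst: "\<And>s. s \<in> S \<Longrightarrow> st s \<in> S" and x: "x \<in> comm A S"
  shows "st x \<in> comm A S"
proof -
  have sub: "\<And>x. x \<in> S \<Longrightarrow> x \<in> CA" using S by blast
  have xc: "x \<in> CA" using x unfolding comm_def by auto
  have "s \<otimes> st x = st x \<otimes> s" if s: "s \<in> S" for s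
  proof -
    have ss: "st s \<in> S" using Sst s .
    have c: "st s \<otimes> x = x \<otimes> st s" using x ss unfolding comm_def by auto
    have sc': "s \<in> CA" "st s \<in> CA" using s ss sub by auto
    have "s \<otimes> st x = st (x \<otimes> st s)" using xc sc' by (simp add: st_mul)
    also have "\<dots> = st (st s \<otimes> x)" using c by simp
    also have "\<dots> = st x \<otimes> s" using xc sc' by (simp add: st_mul)
    finally show ?thesis .
  qed
  thus ?thesis using xc unfolding comm_def by auto
qed

lemma le_eps: "(\<And>e. e > 0 \<Longrightarrow> (r::real) < e) \<Longrightarrow> r \<le> 0"
proof (rule ccontr)
  assume h: "\<And>e. e > 0 \<Longrightarrow> (r::real) < e" and "\<not> r \<le> 0"
  hence "r > 0" by simp
  from h[OF this] show False by simp
qed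

lemma comm_limit:
  fixes s :: "nat \<Rightarrow> 'a"
  assumes S: "S \<subseteq> CA" and s: "\<forall>k. s k \<in> comm A S" and x: "x \<in> CA"
    and lim: "\<forall>e>0. \<exists>N. \<forall>k\<ge>N. nm (ca_diff A (s k) x) < e"
  shows "x \<in> comm A S"
proof -
  have "t \<otimes> x = x \<otimes> t" if t: "t \<in> S" for t
  proof -
    have tc: "t \<in> CA" using t S by blast
    define d where "d = t \<otimes> x \<oplus> ng (x \<otimes> t)"
    have dc: "d \<in> CA" using tc x by (simp add: d_def)
    have key: "nm d \<le> 2 * nm t * nm (ca_diff A (s k) x)" for k
    proof -
      have sk: "s k \<in> CA" "t \<otimes> s k = s k \<otimes> t" using s t unfolding comm_def by auto
      define w where "w = ca_diff A (s k) x"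
      have wc: "w \<in> CA" using sk x by (simp add: w_def ca_diff_def)
      have e1': "w \<otimes> t = s k \<otimes> t \<oplus> ng (x \<otimes> t)" using sk x tc
        by (simp add: w_def ca_diff_def distr ng_mul_l)
      have e2': "ng (t \<otimes> w) = ng (s k \<otimes> t) \<oplus> t \<otimes> x" using sk x tc
        by (simp add: w_def ca_diff_def distl ng_mul_r ng_add)
      have "w \<otimes> t \<oplus> ng (t \<otimes> w) = (s k \<otimes> t \<oplus> ng (s k \<otimes> t)) \<oplus> (ng (x \<otimes> t) \<oplus> t \<otimes> x)"
        unfolding e1' e2' by (rule add_swap) (use sk x tc in auto)
      also have "\<dots> = d" using sk x tc by (simp add: d_def add_comm)
      finally have dd: "d = w \<otimes> t \<oplus> ng (t \<otimes> w)" by simp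
      have "nm d \<le> nm (w \<otimes> t) + nm (ng (t \<otimes> w))" unfolding dd using wc tc by (simp add: nm_add)
      also have "\<dots> \<le> nm w * nm t + nm t * nm w"
      proof (rule add_mono)
        show "nm (w \<otimes> t) \<le> nm w * nm t" using nm_mul[OF wc tc] .
        show "nm (ng (t \<otimes> w)) \<le> nm t * nm w" using nm_mul[OF tc wc] nm_ng[OF mul_in[OF tc wc]] by simp
      qed
      finally show ?thesis unfolding w_def by simp
    qed
    have "nm d < e" if e: "e > 0" for e
    proof -
      have nt: "nm t \<ge> 0" using tc nm_nonneg by blast
      define eps where "eps = e / (2 * nm t + 1)"
      have eps: "eps > 0" using e nt by (simp add: eps_def)
      obtain N where N: "\<forall>k\<ge>N. nm (ca_diff A (s k) x) < eps" using lim eps by blast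
      have "nm d \<le> 2 * nm t * nm (ca_diff A (s N) x)" by (rule key)
      also have "\<dots> \<le> 2 * nm t * eps" using N nt by (intro mult_left_mono) auto
      also have "\<dots> < e" using e nt unfolding eps_def by (simp add: field_simps)
      finally show ?thesis .
    qed
    hence "nm d \<le> 0" by (rule le_eps)
    hence "nm d = 0" using nm_nonneg[OF dc] by linarith
    hence "d = z0" using nm_zero[OF dc] by blast
    thus ?thesis unfolding d_def using tc x by (intro add_neg_eq0[of "t \<otimes> x" "x \<otimes> t"]) auto
  qed
  thus ?thesis using x unfolding comm_def by auto
qed

end



definition Cs :: "'a cstar \<Rightarrow> 'a set \<Rightarrow> 'a cstar" where
  "Cs B S = B\<lparr>ca_carrier := bicomm B S\<rparr>"
definition inc :: "'a cstar \<Rightarrow> 'a set \<Rightarrow> 'a \<Rightarrow> 'a" where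
  "inc B S = restrict (\<lambda>x. x) (bicomm B S)"
definition gs :: "'a cstar \<Rightarrow> 'a set \<Rightarrow> bool" where
  "gs B S \<longleftrightarrow> S \<subseteq> ca_carrier B \<and> (\<forall>a\<in>S. \<forall>b\<in>S. ca_mul B a b = ca_mul B b a) \<and>
     (\<forall>a\<in>S. ca_star B a \<in> S)"

lemma ca_sum_upd: "ca_sum (B\<lparr>ca_carrier := T\<rparr>) f m = ca_sum B f m"
  by (induction m) simp_all

context ucs begin

lemma comm_mono: "S1 \<subseteq> S2 \<Longrightarrow> comm A S2 \<subseteq> comm A S1" unfolding comm_def by blast
lemma bicomm_mono: "S1 \<subseteq> S2 \<Longrightarrow> bicomm A S1 \<subseteq> bicomm A S2"
  unfolding bicomm_def comm_def by blast

lemma bicomm_facts: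
  assumes g: "gs A S"
  shows "bicomm A S \<subseteq> CA" "S \<subseteq> bicomm A S"
    "z0 \<in> bicomm A S" "e1 \<in> bicomm A S"
    "\<And>x y. x\<in>bicomm A S \<Longrightarrow> y\<in>bicomm A S \<Longrightarrow> x \<oplus> y \<in> bicomm A S"
    "\<And>x y. x\<in>bicomm A S \<Longrightarrow> y\<in>bicomm A S \<Longrightarrow> x \<otimes> y \<in> bicomm A S"
    "\<And>c x. x\<in>bicomm A S \<Longrightarrow> sc c x \<in> bicomm A S"
    "\<And>x. x\<in>bicomm A S \<Longrightarrow> st x \<in> bicomm A S"
    "\<And>x y. x\<in>bicomm A S \<Longrightarrow> y\<in>bicomm A S \<Longrightarrow> x \<otimes> y = y \<otimes> x"
    "unital_cstar_algebra (Cs A S)" "commutative_cstar (Cs A S)"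
proof -
  have S: "S \<subseteq> CA" and Sc: "\<And>a b. a\<in>S \<Longrightarrow> b\<in>S \<Longrightarrow> a \<otimes> b = b \<otimes> a"
    and Ss: "\<And>a. a\<in>S \<Longrightarrow> st a \<in> S" using g unfolding gs_def by auto
  have cS: "comm A S \<subseteq> CA" by (rule comm_sub)
  have ccS: "comm A S \<subseteq> CA" by (rule comm_sub)
  show sub: "bicomm A S \<subseteq> CA" unfolding bicomm_def by (rule comm_sub)
  have S_c: "S \<subseteq> comm A S" using S Sc unfolding comm_def by auto
  show "S \<subseteq> bicomm A S" using S unfolding bicomm_def comm_def by auto
  have bc: "bicomm A S \<subseteq> comm A S" using S_c unfolding bicomm_def comm_def by auto
  show "z0 \<in> bicomm A S" "e1 \<in> bicomm A S"
    "\<And>x y. x\<in>bicomm A S \<Longrightarrow> y\<in>bicomm A S \<Longrightarrow> x \<oplus> y \<in> bicomm A S"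
    "\<And>x y. x\<in>bicomm A S \<Longrightarrow> y\<in>bicomm A S \<Longrightarrow> x \<otimes> y \<in> bicomm A S"
    "\<And>c x. x\<in>bicomm A S \<Longrightarrow> sc c x \<in> bicomm A S"
    unfolding bicomm_def using comm_closed[OF cS] by auto
  have cst: "\<And>x. x \<in> comm A S \<Longrightarrow> st x \<in> comm A S" using comm_star[OF S Ss] by blast
  show st: "\<And>x. x\<in>bicomm A S \<Longrightarrow> st x \<in> bicomm A S"
    unfolding bicomm_def using comm_star[OF cS cst] by blast
  show cm: "\<And>x y. x\<in>bicomm A S \<Longrightarrow> y\<in>bicomm A S \<Longrightarrow> x \<otimes> y = y \<otimes> x"
  proof -
    fix x y assume "x\<in>bicomm A S" "y\<in>bicomm A S"
    hence "y \<in> comm A S" "x \<in> comm A (comm A S)" using bc unfolding bicomm_def by auto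
    thus "x \<otimes> y = y \<otimes> x" unfolding comm_def by auto
  qed
  show u: "unital_cstar_algebra (Cs A S)" unfolding Cs_def
  proof (rule sub_ucs)
    show "bicomm A S \<subseteq> CA" by fact
    show "z0 \<in> bicomm A S" "e1 \<in> bicomm A S"
      unfolding bicomm_def using comm_closed[OF cS] by auto
    show "\<And>x y. x\<in>bicomm A S \<Longrightarrow> y\<in>bicomm A S \<Longrightarrow> x \<oplus> y \<in> bicomm A S"
      "\<And>x y. x\<in>bicomm A S \<Longrightarrow> y\<in>bicomm A S \<Longrightarrow> x \<otimes> y \<in> bicomm A S"
      "\<And>c x. x\<in>bicomm A S \<Longrightarrow> sc c x \<in> bicomm A S"
      unfolding bicomm_def using comm_closed[OF cS] by auto
    show "\<And>x. x\<in>bicomm A S \<Longrightarrow> st x \<in> bicomm A S" by (rule st)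
    show "\<And>(s::nat\<Rightarrow>'a) x. \<forall>k. s k \<in> bicomm A S \<Longrightarrow> x \<in> CA \<Longrightarrow>
      \<forall>e>0. \<exists>N. \<forall>k\<ge>N. nm (ca_diff A (s k) x) < e \<Longrightarrow> x \<in> bicomm A S"
      unfolding bicomm_def by (rule comm_limit[OF cS])
  qed
  show "commutative_cstar (Cs A S)" unfolding commutative_cstar_def
    using u cm by (simp add: Cs_def)
qed

lemma inc_mor:
  assumes T: "T \<subseteq> ca_carrier C" "e1 \<in> T"
    "\<And>x y. x\<in>T \<Longrightarrow> y\<in>T \<Longrightarrow> x \<oplus> y \<in> T"
    "\<And>x y. x\<in>T \<Longrightarrow> y\<in>T \<Longrightarrow> x \<otimes> y \<in> T"
    "\<And>c x. x\<in>T \<Longrightarrow> sc c x \<in> T" "\<And>x. x \<in> T \<Longrightarrow> st x \<in> T"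
  and ops: "ca_add C = ca_add A" "ca_mul C = ca_mul A" "ca_scale C = ca_scale A"
    "ca_star C = ca_star A" "ca_one C = ca_one A"
  shows "cstar_mor (A\<lparr>ca_carrier := T\<rparr>) C (restrict (\<lambda>x. x) T)"
  unfolding cstar_mor_def cstar_hom_def using T ops by auto

lemma exactly_one:
  assumes cm: "\<forall>x\<in>CA. \<forall>y\<in>CA. x \<otimes> y = y \<otimes> x"
    and M: "maximal_ideal A M"
    and Q: "\<And>i. i < m \<Longrightarrow> Q i \<in> CA"
    and orth: "\<And>i j. i < m \<Longrightarrow> j < m \<Longrightarrow> i \<noteq> j \<Longrightarrow> Q i \<otimes> Q j = z0"
    and sum: "ca_sum A Q m = e1"
  shows "\<exists>!i. i < m \<and> Q i \<notin> M"
proof -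
  have I: "cstar_ideal A M" and Mne: "M \<noteq> CA"
    and Mmax: "\<And>J. cstar_ideal A J \<Longrightarrow> M \<subseteq> J \<Longrightarrow> J \<noteq> CA \<Longrightarrow> J = M"
    using M unfolding maximal_ideal_def by auto
  have MC: "M \<subseteq> CA" and z: "z0 \<in> M" and Madd: "\<And>x y. x\<in>M \<Longrightarrow> y\<in>M \<Longrightarrow> x \<oplus> y \<in> M"
    and Mng: "\<And>x. x\<in>M \<Longrightarrow> ng x \<in> M"
    and Mmul: "\<And>x a. x\<in>M \<Longrightarrow> a\<in>CA \<Longrightarrow> a \<otimes> x \<in> M \<and> x \<otimes> a \<in> M"
    using I unfolding cstar_ideal_def by auto
  have one_notin: "e1 \<notin> M"
  proof
    assume "e1 \<in> M"
    hence "a \<in> M" if "a \<in> CA" for a using Mmul[of e1 a] that by simp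
    hence "M = CA" using MC by blast
    thus False using Mne by simp
  qed
  have ex: "\<exists>i. i < m \<and> Q i \<notin> M"
  proof (rule ccontr)
    assume "\<not> ?thesis"
    hence all: "\<And>i. i < m \<Longrightarrow> Q i \<in> M" by blast
    have "k \<le> m \<Longrightarrow> ca_sum A Q k \<in> M" for k
      by (induction k) (auto simp: z intro!: Madd all)
    hence "e1 \<in> M" using sum by force
    thus False using one_notin by simp
  qed
  have uniq: "i = j" if i: "i < m" "Q i \<notin> M" and j: "j < m" "Q j \<notin> M" for i j
  proof (rule ccontr)
    assume ij: "i \<noteq> j"
    define J where "J = {x \<in> CA. x \<otimes> Q j \<in> M}"
    have Qj: "Q j \<in> CA" using Q j by blast
    have JI: "cstar_ideal A J" unfolding cstar_ideal_def
    proof (intro conjI ballI)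
      show "J \<subseteq> CA" unfolding J_def by auto
      show "z0 \<in> J" unfolding J_def using z Qj by simp
      show "x \<oplus> y \<in> J" if "x \<in> J" "y \<in> J" for x y
        using that Qj Madd unfolding J_def by (auto simp: distr)
      show "ng x \<in> J" if "x \<in> J" for x
        using that Qj Mng unfolding J_def by (auto simp: ng_mul_l)
      fix x a assume x: "x \<in> J" and a: "a \<in> CA"
      have xc: "x \<in> CA" "x \<otimes> Q j \<in> M" using x unfolding J_def by auto
      have "a \<otimes> x \<otimes> Q j \<in> M" using xc a Qj Mmul by (simp add: mul_assoc)
      thus "a \<otimes> x \<in> J" using xc a unfolding J_def by simp
      have "x \<otimes> a = a \<otimes> x" using cm xc a by blast
      thus "x \<otimes> a \<in> J" using \<open>a \<otimes> x \<otimes> Q j \<in> M\<close> xc a unfolding J_def by simp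
    qed
    have MJ: "M \<subseteq> J" unfolding J_def using MC Mmul Qj by auto
    have QiJ: "Q i \<in> J" unfolding J_def using orth[OF i(1) j(1) ij] Q[OF i(1)] z by simp
    have "J = CA"
    proof (rule ccontr)
      assume "J \<noteq> CA"
      hence "J = M" using Mmax JI MJ by blast
      thus False using QiJ i by simp
    qed
    hence "e1 \<in> J" by simp
    hence "Q j \<in> M" unfolding J_def using Qj by simp
    thus False using j by simp
  qed
  show ?thesis using ex uniq by blast
qed

end

locale plumb =
  fixes F :: "'u cstar \<Rightarrow> 'v set"
    and Fmor :: "('u \<Rightarrow> 'u) \<Rightarrow> 'u cstar \<Rightarrow> 'u cstar \<Rightarrow> 'v \<Rightarrow> 'v"
    and \<eta> :: "'u cstar \<Rightarrow> 'v \<Rightarrow> 'u set"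
    and B :: "'u cstar" and x :: 'v
  assumes fnc: "contravariant_functor F Fmor"
    and nat: "gelf_nat_iso F Fmor \<eta>"
    and uB: "unital_cstar_algebra B"
    and xF: "x \<in> F B"
begin

interpretation b: ucs B by (rule ucs.intro[OF uB])

definition MS :: "'u set \<Rightarrow> 'u set" where
  "MS S = \<eta> (Cs B S) (Fmor (inc B S) (Cs B S) B x)"

lemma incB: "gs B S \<Longrightarrow> cstar_mor (Cs B S) B (inc B S)"
  unfolding Cs_def inc_def
  by (rule b.inc_mor) (use b.bicomm_facts in auto)

lemma inc12: "gs B S1 \<Longrightarrow> gs B S2 \<Longrightarrow> S1 \<subseteq> S2 \<Longrightarrow> cstar_mor (Cs B S1) (Cs B S2) (inc B S1)"
  unfolding Cs_def inc_def
  apply (rule b.inc_mor)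
  using b.bicomm_facts(3-8)[of S1] b.bicomm_mono[of S1 S2] by auto

lemma yF: "gs B S \<Longrightarrow> Fmor (inc B S) (Cs B S) B x \<in> F (Cs B S)"
  using fnc incB b.bicomm_facts(10)[of S] uB xF unfolding contravariant_functor_def by blast

lemma MS_max: "gs B S \<Longrightarrow> maximal_ideal (Cs B S) (MS S)"
proof -
  assume g: "gs B S"
  have "commutative_cstar (Cs B S)" using b.bicomm_facts(11)[OF g] .
  hence "bij_betw (\<eta> (Cs B S)) (F (Cs B S)) (Gelf (Cs B S))" using nat unfolding gelf_nat_iso_def by blast
  hence "MS S \<in> Gelf (Cs B S)" unfolding MS_def using yF[OF g] bij_betwE by blast
  thus ?thesis unfolding Gelf_def by simp
qed

lemma MS_restr:
  assumes g1: "gs B S1" and g2: "gs B S2" and sub: "S1 \<subseteq> S2"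
  shows "MS S1 = {z \<in> bicomm B S1. z \<in> MS S2}"
proof -
  have bsub: "bicomm B S1 \<subseteq> bicomm B S2" using b.bicomm_mono[OF sub] .
  have comp: "compose (ca_carrier (Cs B S1)) (inc B S2) (inc B S1) = inc B S1"
    unfolding compose_def Cs_def inc_def using bsub by (auto simp: restrict_def fun_eq_iff)
  have "Fmor (compose (ca_carrier (Cs B S1)) (inc B S2) (inc B S1)) (Cs B S1) B x =
        Fmor (inc B S1) (Cs B S1) (Cs B S2) (Fmor (inc B S2) (Cs B S2) B x)"
    using fnc xF uB b.bicomm_facts(10)[OF g1] b.bicomm_facts(10)[OF g2] inc12[OF g1 g2 sub] incB[OF g2]
    unfolding contravariant_functor_def by blast
  hence eq: "Fmor (inc B S1) (Cs B S1) B x = Fmor (inc B S1) (Cs B S1) (Cs B S2) (Fmor (inc B S2) (Cs B S2) B x)"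
    using comp by simp
  have "\<eta> (Cs B S1) (Fmor (inc B S1) (Cs B S1) (Cs B S2) (Fmor (inc B S2) (Cs B S2) B x)) =
        Gelf_mor (inc B S1) (Cs B S1) (\<eta> (Cs B S2) (Fmor (inc B S2) (Cs B S2) B x))"
    using nat b.bicomm_facts(11)[OF g1] b.bicomm_facts(11)[OF g2] inc12[OF g1 g2 sub] yF[OF g2]
    unfolding gelf_nat_iso_def by blast
  hence "MS S1 = Gelf_mor (inc B S1) (Cs B S1) (MS S2)" by (simp only: MS_def eq)
  thus ?thesis unfolding Gelf_mor_def Cs_def inc_def by auto
qed

definition val :: "'u \<Rightarrow> bool" where
  "val p \<longleftrightarrow> p \<notin> MS {p}"

lemma decomp:
  assumes Q: "\<And>i. i < m \<Longrightarrow> Q i \<in> ca_carrier B"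
    and sa: "\<And>i. i < m \<Longrightarrow> ca_star B (Q i) = Q i"
    and orth: "\<And>i j. i < m \<Longrightarrow> j < m \<Longrightarrow> i \<noteq> j \<Longrightarrow> ca_mul B (Q i) (Q j) = ca_zero B"
    and sum: "ca_sum B Q m = ca_one B"
  shows "\<exists>!i. i < m \<and> val (Q i)"
proof -
  define S where "S = Q ` {..<m}"
  have gS: "gs B S" unfolding gs_def S_def
  proof (intro conjI ballI)
    show "Q ` {..<m} \<subseteq> ca_carrier B" using Q by auto
    fix a b assume "a \<in> Q ` {..<m}" "b \<in> Q ` {..<m}"
    then obtain i j where "i<m" "j<m" "a = Q i" "b = Q j" by auto
    thus "ca_mul B a b = ca_mul B b a" using orth by (cases "i = j") auto
  next
    fix a assume "a \<in> Q ` {..<m}"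
    thus "ca_star B a \<in> Q ` {..<m}" using sa by auto
  qed
  have gi: "gs B {Q i}" if "i < m" for i
    unfolding gs_def using Q[OF that] sa[OF that] by auto
  have vi: "val (Q i) \<longleftrightarrow> Q i \<notin> MS S" if i: "i < m" for i
  proof -
    have "MS {Q i} = {z \<in> bicomm B {Q i}. z \<in> MS S}"
      by (rule MS_restr[OF gi[OF i] gS]) (use i in \<open>auto simp: S_def\<close>)
    moreover have "Q i \<in> bicomm B {Q i}" using b.bicomm_facts(2)[OF gi[OF i]] by auto
    ultimately show ?thesis unfolding val_def by auto
  qed
  interpret c: ucs "Cs B S" by (rule ucs.intro[OF b.bicomm_facts(10)[OF gS]])
  have "\<exists>!i. i < m \<and> Q i \<notin> MS S"
  proof (rule c.exactly_one)
    show "\<forall>x\<in>ca_carrier (Cs B S). \<forall>y\<in>ca_carrier (Cs B S). ca_mul (Cs B S) x y = ca_mul (Cs B S) y x"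
      using b.bicomm_facts(9)[OF gS] by (simp add: Cs_def)
    show "maximal_ideal (Cs B S) (MS S)" by (rule MS_max[OF gS])
    show "Q i \<in> ca_carrier (Cs B S)" if "i < m" for i
      using b.bicomm_facts(2)[OF gS] that by (auto simp: Cs_def S_def)
    show "ca_mul (Cs B S) (Q i) (Q j) = ca_zero (Cs B S)" if "i < m" "j < m" "i \<noteq> j" for i j
      using orth that by (simp add: Cs_def)
    show "ca_sum (Cs B S) Q m = ca_one (Cs B S)" using sum by (simp add: Cs_def ca_sum_upd)
  qed
  thus ?thesis using vi by blast
qed

end



definition phi :: "'a cstar \<Rightarrow> nat \<Rightarrow> (nat \<Rightarrow> nat \<Rightarrow> complex) \<Rightarrow> nat \<Rightarrow> nat \<Rightarrow> 'a" where
  "phi A n X = (\<lambda>i j. if i < n \<and> j < n then ca_scale A (X i j) (ca_one A) else ca_zero A)"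

definition mm :: "nat \<Rightarrow> (nat \<Rightarrow> nat \<Rightarrow> complex) \<Rightarrow> (nat \<Rightarrow> nat \<Rightarrow> complex) \<Rightarrow> nat \<Rightarrow> nat \<Rightarrow> complex" where
  "mm n X Y = (\<lambda>i j. \<Sum>k<n. X i k * Y k j)"

context ucs begin

lemma phi_in: "phi A n X \<in> ca_carrier (mat_cstar A n)"
  unfolding phi_def mat_cstar_def by auto

lemma phi_mul: "ca_mul (mat_cstar A n) (phi A n X) (phi A n Y) = phi A n (mm n X Y)"
proof -
  have "ca_sum A (\<lambda>k. phi A n X i k \<otimes> phi A n Y k j) n = sc (\<Sum>k<n. X i k * Y k j) e1"
    if "i < n" "j < n" for i j
  proof -
    have "ca_sum A (\<lambda>k. phi A n X i k \<otimes> phi A n Y k j) n = ca_sum A (\<lambda>k. sc (X i k * Y k j) e1) n"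
      by (rule ca_sum_cong) (use that in \<open>simp add: phi_def sc_mul_same\<close>)
    also have "\<dots> = sc (\<Sum>k<n. X i k * Y k j) e1" by (rule ca_sum_sc)
    finally show ?thesis .
  qed
  thus ?thesis unfolding mat_cstar_def mm_def by (auto simp: fun_eq_iff phi_def)
qed

lemma phi_add: "ca_add (mat_cstar A n) (phi A n X) (phi A n Y) = phi A n (\<lambda>i j. X i j + Y i j)"
  unfolding mat_cstar_def phi_def by (auto simp: fun_eq_iff sc_add_same)

lemma phi_star: "ca_star (mat_cstar A n) (phi A n X) = phi A n (\<lambda>i j. cnj (X j i))"
  unfolding mat_cstar_def phi_def by (auto simp: fun_eq_iff st_sc_one)

lemma phi_one: "ca_one (mat_cstar A n) = phi A n (\<lambda>i j. if i = j then 1 else 0)"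
  unfolding mat_cstar_def phi_def by (auto simp: fun_eq_iff)

lemma phi_zero: "ca_zero (mat_cstar A n) = phi A n (\<lambda>i j. 0)"
  unfolding mat_cstar_def phi_def by (auto simp: fun_eq_iff)

lemma phi_cong: "(\<And>i j. i < n \<Longrightarrow> j < n \<Longrightarrow> X i j = Y i j) \<Longrightarrow> phi A n X = phi A n Y"
  unfolding phi_def by (auto simp: fun_eq_iff)

lemma mat_sc0: "N \<in> ca_carrier (mat_cstar A n) \<Longrightarrow> ca_scale (mat_cstar A n) 0 N = ca_zero (mat_cstar A n)"
  unfolding mat_cstar_def by (auto simp: fun_eq_iff)

end

locale iso =
  fixes A :: "'a cstar" and B :: "'u cstar" and n :: nat and g :: "'u \<Rightarrow> nat \<Rightarrow> nat \<Rightarrow> 'a"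
  assumes uA: "unital_cstar_algebra A" and uB: "unital_cstar_algebra B"
    and hom: "cstar_hom B (mat_cstar A n) g"
    and bij: "bij_betw g (ca_carrier B) (ca_carrier (mat_cstar A n))"
begin

interpretation a: ucs A by (rule ucs.intro[OF uA])
interpretation b: ucs B by (rule ucs.intro[OF uB])

abbreviation "MM \<equiv> mat_cstar A n"
definition "h = inv_into (ca_carrier B) g"

lemma gin: "y \<in> ca_carrier B \<Longrightarrow> g y \<in> ca_carrier MM"
  using bij bij_betwE by blast
lemma hin: "X \<in> ca_carrier MM \<Longrightarrow> h X \<in> ca_carrier B"
proof -
  assume "X \<in> ca_carrier MM"
  hence "X \<in> g ` ca_carrier B" using bij by (simp add: bij_betw_def)
  thus ?thesis unfolding h_def by (rule inv_into_into)
qed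
lemma gh: "X \<in> ca_carrier MM \<Longrightarrow> g (h X) = X"
  unfolding h_def using bij by (meson bij_betw_inv_into_right)
lemma hg: "y \<in> ca_carrier B \<Longrightarrow> h (g y) = y"
  unfolding h_def using bij by (meson bij_betw_inv_into_left)

lemma hom_parts:
  "\<And>x y. x \<in> ca_carrier B \<Longrightarrow> y \<in> ca_carrier B \<Longrightarrow> g (ca_add B x y) = ca_add MM (g x) (g y)"
  "\<And>x y. x \<in> ca_carrier B \<Longrightarrow> y \<in> ca_carrier B \<Longrightarrow> g (ca_mul B x y) = ca_mul MM (g x) (g y)"
  "\<And>c x. x \<in> ca_carrier B \<Longrightarrow> g (ca_scale B c x) = ca_scale MM c (g x)"
  "\<And>x. x \<in> ca_carrier B \<Longrightarrow> g (ca_star B x) = ca_star MM (g x)"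
  "g (ca_one B) = ca_one MM"
  using hom unfolding cstar_hom_def by auto

lemma h_add: "X \<in> ca_carrier MM \<Longrightarrow> Y \<in> ca_carrier MM \<Longrightarrow> h (ca_add MM X Y) = ca_add B (h X) (h Y)"
  by (metis b.add_in gh hg hin hom_parts(1))
lemma h_mul: "X \<in> ca_carrier MM \<Longrightarrow> Y \<in> ca_carrier MM \<Longrightarrow> h (ca_mul MM X Y) = ca_mul B (h X) (h Y)"
  by (metis b.mul_in gh hg hin hom_parts(2))
lemma h_star: "X \<in> ca_carrier MM \<Longrightarrow> h (ca_star MM X) = ca_star B (h X)"
  by (metis b.st_in gh hg hin hom_parts(4))
lemma h_one: "h (ca_one MM) = ca_one B"
  by (metis b.one_in hg hom_parts(5))
lemma h_zero: "h (ca_zero MM) = ca_zero B"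
proof -
  have "g (ca_zero B) = g (ca_scale B 0 (ca_zero B))" by simp
  also have "\<dots> = ca_scale MM 0 (g (ca_zero B))" by (rule hom_parts(3)[OF b.zero_in])
  also have "\<dots> = ca_zero MM" by (rule a.mat_sc0[OF gin[OF b.zero_in]])
  finally show ?thesis using hg[OF b.zero_in] by metis
qed

definition "Phi X = h (phi A n X)"

lemma Phi_in: "Phi X \<in> ca_carrier B" unfolding Phi_def by (rule hin[OF a.phi_in])
lemma Phi_mul: "ca_mul B (Phi X) (Phi Y) = Phi (mm n X Y)"
  unfolding Phi_def by (simp add: h_mul[OF a.phi_in a.phi_in, symmetric] a.phi_mul)
lemma Phi_add: "ca_add B (Phi X) (Phi Y) = Phi (\<lambda>i j. X i j + Y i j)"
  unfolding Phi_def by (simp add: h_add[OF a.phi_in a.phi_in, symmetric] a.phi_add)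
lemma Phi_star: "ca_star B (Phi X) = Phi (\<lambda>i j. cnj (X j i))"
  unfolding Phi_def by (simp add: h_star[OF a.phi_in, symmetric] a.phi_star)
lemma Phi_one: "Phi (\<lambda>i j. if i = j then 1 else 0) = ca_one B"
  unfolding Phi_def by (simp add: h_one[symmetric] a.phi_one)
lemma Phi_zero: "Phi (\<lambda>i j. 0) = ca_zero B"
  unfolding Phi_def by (simp add: h_zero[symmetric] a.phi_zero)
lemma Phi_cong: "(\<And>i j. i < n \<Longrightarrow> j < n \<Longrightarrow> X i j = Y i j) \<Longrightarrow> Phi X = Phi Y"
  unfolding Phi_def by (metis a.phi_cong)
lemma Phi_sum: "ca_sum B (\<lambda>i. Phi (X i)) m = Phi (\<lambda>r s. \<Sum>i<m. X i r s)"
proof (induction m)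
  case 0 thus ?case by (simp add: Phi_zero)
next
  case (Suc m) thus ?case by (simp add: Phi_add)
qed

end



definition ex1 :: "bool \<Rightarrow> bool \<Rightarrow> bool \<Rightarrow> bool" where
 "ex1 p q r \<longleftrightarrow> (p \<and> \<not>q \<and> \<not>r) \<or> (\<not>p \<and> q \<and> \<not>r) \<or> (\<not>p \<and> \<not>q \<and> r)"

type_synonym iv = "int \<times> int \<times> int"

definition kst :: "(iv \<times> iv \<times> iv) list" where
 "kst = [((0,0,1),(1,2,0),(2,-1,0)),
  ((1,-1,-1),(1,-1,2),(1,1,0)),
  ((1,-1,-1),(1,0,1),(1,2,-1)),
  ((1,-2,-1),(1,0,1),(1,1,-1)),
  ((1,-1,0),(1,1,-2),(1,1,1)),
  ((1,-5,-2),(1,1,-2),(2,0,1)),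
  ((0,1,0),(1,0,2),(2,0,-1)),
  ((1,-1,-2),(1,-1,1),(1,1,0)),
  ((1,-1,1),(1,0,-1),(1,2,1)),
  ((1,2,-1),(1,2,5),(2,-1,0)),
  ((1,-1,-2),(1,5,-2),(2,0,1)),
  ((1,0,2),(2,-1,-1),(2,5,-1)),
  ((0,2,-1),(1,1,2),(5,-1,-2)),
  ((0,1,2),(1,-2,1),(5,2,-1)),
  ((0,1,1),(1,1,-1),(2,-1,1)),
  ((1,-2,-5),(1,-2,1),(2,1,0)),
  ((0,1,-1),(0,1,1),(1,0,0)),
  ((1,0,2),(2,-5,-1),(2,1,-1)),
  ((1,-5,2),(1,1,2),(2,0,-1)),
  ((1,-2,0),(2,1,-1),(2,1,5)),
  ((0,0,1),(1,-2,0),(2,1,0)),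
  ((0,1,0),(1,0,-1),(1,0,1)),
  ((0,2,-1),(1,-1,-2),(5,1,2)),
  ((1,-2,1),(1,0,-1),(1,1,1)),
  ((0,0,1),(1,-1,0),(1,1,0)),
  ((0,1,2),(1,2,-1),(5,-2,1)),
  ((1,-1,0),(1,1,-1),(1,1,2)),
  ((0,1,2),(0,2,-1),(1,0,0)),
  ((1,0,-2),(2,-1,1),(2,5,1)),
  ((0,0,1),(0,1,0),(1,0,0)),
  ((0,1,-1),(1,1,1),(2,-1,-1)),
  ((0,1,-1),(1,-1,-1),(2,1,1)),
  ((1,2,0),(2,-1,-5),(2,-1,1)),
  ((1,0,-2),(2,-5,1),(2,1,1)),
  ((0,1,0),(1,0,-2),(2,0,1)),
  ((0,1,1),(1,-1,1),(2,1,-1)),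
  ((1,-2,0),(2,1,-5),(2,1,1))]"

lemma ks_unsat:
  assumes "\<forall>(x,y,z)\<in>set kst. ex1 (V x) (V y) (V z)"
  shows False
  using assms unfolding kst_def ex1_def by (simp only: set_simps ball_simps prod.case) sat

definition co :: "iv \<Rightarrow> nat \<Rightarrow> int" where
  "co u r = (if r = 0 then fst u else if r = 1 then fst (snd u) else snd (snd u))"
definition nrm :: "iv \<Rightarrow> int" where "nrm u = co u 0 * co u 0 + co u 1 * co u 1 + co u 2 * co u 2"
definition dot :: "iv \<Rightarrow> iv \<Rightarrow> int" where "dot u w = co u 0 * co w 0 + co u 1 * co w 1 + co u 2 * co w 2"

definition tri_ok :: "iv \<Rightarrow> iv \<Rightarrow> iv \<Rightarrow> bool" where
  "tri_ok x y z \<longleftrightarrow> dot x y = 0 \<and> dot x z = 0 \<and> dot y z = 0 \<and>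
    (\<forall>r<3. \<forall>s<3. real_of_int (co x r * co x s) / real_of_int (nrm x) + real_of_int (co y r * co y s) / real_of_int (nrm y)
       + real_of_int (co z r * co z s) / real_of_int (nrm z) = (if r = s then 1 else 0))"

lemma all3: "(\<forall>r<(3::nat). P r) \<longleftrightarrow> P 0 \<and> P 1 \<and> P 2"
  by (auto simp: less_Suc_eq numeral_eq_Suc)

lemma kst_ok: "\<forall>(x,y,z)\<in>set kst. tri_ok x y z"
  unfolding kst_def tri_ok_def all3 dot_def nrm_def co_def by simp




definition mmr :: "nat \<Rightarrow> (nat \<Rightarrow> nat \<Rightarrow> real) \<Rightarrow> (nat \<Rightarrow> nat \<Rightarrow> real) \<Rightarrow> nat \<Rightarrow> nat \<Rightarrow> real" where
  "mmr n X Y = (\<lambda>i j. \<Sum>k<n. X i k * Y k j)"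
definition Er :: "nat \<Rightarrow> nat \<Rightarrow> nat \<Rightarrow> real" where
  "Er d = (\<lambda>i j. if i = d \<and> j = d then 1 else 0)"
definition pos :: "nat \<Rightarrow> nat \<Rightarrow> nat \<Rightarrow> nat" where
  "pos a b i = (if i = a then 0 else if i = b then 1 else 2)"
definition ev :: "nat \<Rightarrow> nat \<Rightarrow> nat \<Rightarrow> iv \<Rightarrow> nat \<Rightarrow> int" where
  "ev a b c u i = (if i = a \<or> i = b \<or> i = c then co u (pos a b i) else 0)"
definition Pr :: "nat \<Rightarrow> nat \<Rightarrow> nat \<Rightarrow> iv \<Rightarrow> nat \<Rightarrow> nat \<Rightarrow> real" where
  "Pr a b c u = (\<lambda>i j. real_of_int (ev a b c u i * ev a b c u j) * inverse (real_of_int (nrm u)))"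
definition Qt :: "nat \<Rightarrow> nat \<Rightarrow> nat \<Rightarrow> iv \<Rightarrow> iv \<Rightarrow> iv \<Rightarrow> nat \<Rightarrow> nat \<Rightarrow> nat \<Rightarrow> real" where
  "Qt a b c x y z i = (if i = a then Pr a b c x else if i = b then Pr a b c y else if i = c then Pr a b c z else Er i)"

definition good_dec :: "nat \<Rightarrow> (nat \<Rightarrow> nat \<Rightarrow> nat \<Rightarrow> real) \<Rightarrow> bool" where
  "good_dec n Q \<longleftrightarrow> (\<forall>i<n. \<forall>r<n. \<forall>s<n. Q i s r = Q i r s) \<and>
     (\<forall>i<n. \<forall>j<n. i \<noteq> j \<longrightarrow> (\<forall>r<n. \<forall>s<n. mmr n (Q i) (Q j) r s = 0)) \<and>
     (\<forall>r<n. \<forall>s<n. (\<Sum>i<n. Q i r s) = (if r = s then 1 else 0))"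

lemma Er_dec: "good_dec n Er"
  unfolding good_dec_def
proof (intro conjI allI impI)
  fix i r s assume "i < n" "r < n" "s < n"
  show "Er i s r = Er i r s" unfolding Er_def by auto
next
  fix i j r s assume "i < n" "j < n" "i \<noteq> j" "r < n" "s < n"
  show "mmr n (Er i) (Er j) r s = 0" unfolding mmr_def Er_def
    by (rule sum.neutral) (use \<open>i \<noteq> j\<close> in auto)
next
  fix r s assume r: "r < n" and "s < n"
  have "(\<Sum>i<n. Er i r s) = (\<Sum>i<n. if i = r then (if r = s then 1 else 0) else 0)"
    by (rule sum.cong) (auto simp: Er_def)
  also have "\<dots> = (if r = s then 1 else 0)" using r by (simp add: sum.delta)
  finally show "(\<Sum>i<n. Er i r s) = (if r = s then 1 else 0)" .
qed

locale abc =
  fixes n a b c :: nat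
  assumes lt: "a < n" "b < n" "c < n" and dist: "a \<noteq> b" "a \<noteq> c" "b \<noteq> c"
begin

lemma sum3: "(\<And>k. k \<noteq> a \<Longrightarrow> k \<noteq> b \<Longrightarrow> k \<noteq> c \<Longrightarrow> f k = 0) \<Longrightarrow> (\<Sum>k<n. f k) = f a + f b + (f c :: real)"
proof -
  assume z: "\<And>k. k \<noteq> a \<Longrightarrow> k \<noteq> b \<Longrightarrow> k \<noteq> c \<Longrightarrow> f k = 0"
  have "(\<Sum>k<n. f k) = (\<Sum>k\<in>{a,b,c}. f k)"
    by (rule sum.mono_neutral_right) (use lt z in auto)
  also have "\<dots> = f a + f b + f c" using dist by simp
  finally show ?thesis .
qed

lemma ev_simps: "ev a b c u a = co u 0" "ev a b c u b = co u 1" "ev a b c u c = co u 2"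
  "k \<noteq> a \<Longrightarrow> k \<noteq> b \<Longrightarrow> k \<noteq> c \<Longrightarrow> ev a b c u k = 0"
  unfolding ev_def pos_def using dist by auto

lemma Pr_Pr: "dot x y = 0 \<Longrightarrow> mmr n (Pr a b c x) (Pr a b c y) r s = 0"
proof -
  assume d: "dot x y = 0"
  define ix where "ix = inverse (real_of_int (nrm x))"
  define iy where "iy = inverse (real_of_int (nrm y))"
  have "mmr n (Pr a b c x) (Pr a b c y) r s =
     (\<Sum>k<n. real_of_int (ev a b c x r * ev a b c x k) * ix * (real_of_int (ev a b c y k * ev a b c y s) * iy))"
    unfolding mmr_def Pr_def ix_def iy_def by simp
  also have "\<dots> = real_of_int (ev a b c x r * ev a b c x a) * ix * (real_of_int (ev a b c y a * ev a b c y s) * iy)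
     + real_of_int (ev a b c x r * ev a b c x b) * ix * (real_of_int (ev a b c y b * ev a b c y s) * iy)
     + real_of_int (ev a b c x r * ev a b c x c) * ix * (real_of_int (ev a b c y c * ev a b c y s) * iy)"
    by (rule sum3) (simp add: ev_simps)
  also have "\<dots> = real_of_int (ev a b c x r) * real_of_int (ev a b c y s) * ix * iy * real_of_int (dot x y)"
    unfolding ev_simps dot_def by (simp add: algebra_simps)
  also have "\<dots> = 0" using d by simp
  finally show ?thesis .
qed

lemma Pr_Er: "d \<noteq> a \<Longrightarrow> d \<noteq> b \<Longrightarrow> d \<noteq> c \<Longrightarrow> mmr n (Pr a b c x) (Er d) r s = 0"
  unfolding mmr_def by (rule sum.neutral) (auto simp: Er_def Pr_def ev_simps)
lemma Er_Pr: "d \<noteq> a \<Longrightarrow> d \<noteq> b \<Longrightarrow> d \<noteq> c \<Longrightarrow> mmr n (Er d) (Pr a b c x) r s = 0"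
  unfolding mmr_def by (rule sum.neutral) (auto simp: Er_def Pr_def ev_simps)
lemma Er_Er: "d \<noteq> e \<Longrightarrow> mmr n (Er d) (Er e) r s = 0"
  unfolding mmr_def by (rule sum.neutral) (auto simp: Er_def)

lemma dot_sym: "dot x y = dot y x" unfolding dot_def by (simp add: algebra_simps)

lemma Qt_dec:
  assumes t: "tri_ok x y z"
  shows "good_dec n (Qt a b c x y z)"
proof -
  have dots: "dot x y = 0" "dot x z = 0" "dot y z = 0" "dot y x = 0" "dot z x = 0" "dot z y = 0"
    using t unfolding tri_ok_def by (auto simp: dot_sym)
  have tr: "\<And>p q. p < 3 \<Longrightarrow> q < 3 \<Longrightarrow> real_of_int (co x p * co x q) / real_of_int (nrm x) + real_of_int (co y p * co y q) / real_of_int (nrm y)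
       + real_of_int (co z p * co z q) / real_of_int (nrm z) = (if p = q then 1 else 0)"
    using t unfolding tri_ok_def by blast
  show ?thesis unfolding good_dec_def
  proof (intro conjI allI impI)
    fix i r s assume "i < n" "r < n" "s < n"
    show "Qt a b c x y z i s r = Qt a b c x y z i r s" unfolding Qt_def Pr_def Er_def
      by (auto simp: mult.commute)
  next
    fix i j r s assume ij: "i < n" "j < n" "i \<noteq> j" "r < n" "s < n"
    show "mmr n (Qt a b c x y z i) (Qt a b c x y z j) r s = 0"
      unfolding Qt_def using ij dist dots by (auto simp: Pr_Pr Pr_Er Er_Pr Er_Er)
  next
    fix r s assume r: "r < n" and s: "s < n"
    define H where "H = (\<lambda>i. if i = a then Pr a b c x r s else if i = b then Pr a b c y r s else if i = c then Pr a b c z r s else 0)"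
    define K where "K = (\<lambda>i. if i = r then (if r = s \<and> r \<noteq> a \<and> r \<noteq> b \<and> r \<noteq> c then 1 else 0) else (0::real))"
    have "(\<Sum>i<n. Qt a b c x y z i r s) = (\<Sum>i<n. H i + K i)"
      by (rule sum.cong) (auto simp: Qt_def H_def K_def Er_def)
    also have "\<dots> = (\<Sum>i<n. H i) + (\<Sum>i<n. K i)" by (rule sum.distrib)
    also have "(\<Sum>i<n. H i) = Pr a b c x r s + Pr a b c y r s + Pr a b c z r s"
      by (subst sum3[of H]) (auto simp: H_def dist dist[symmetric])
    also have "(\<Sum>i<n. K i) = (if r = s \<and> r \<noteq> a \<and> r \<noteq> b \<and> r \<noteq> c then 1 else 0)"
      unfolding K_def using r by (simp add: sum.delta)
    finally have eq: "(\<Sum>i<n. Qt a b c x y z i r s) = Pr a b c x r s + Pr a b c y r s + Pr a b c z r s +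
       (if r = s \<and> r \<noteq> a \<and> r \<noteq> b \<and> r \<noteq> c then 1 else 0)" .
    show "(\<Sum>i<n. Qt a b c x y z i r s) = (if r = s then 1 else 0)"
    proof (cases "(r = a \<or> r = b \<or> r = c) \<and> (s = a \<or> s = b \<or> s = c)")
      case True
      hence pr: "pos a b r < 3" "pos a b s < 3" "pos a b r = pos a b s \<longleftrightarrow> r = s"
        using dist unfolding pos_def by auto
      have evr: "ev a b c u r = co u (pos a b r)" "ev a b c u s = co u (pos a b s)" for u
        using True unfolding ev_def by auto
      have "Pr a b c x r s + Pr a b c y r s + Pr a b c z r s = (if pos a b r = pos a b s then 1 else 0)"
        using tr[OF pr(1,2)] unfolding Pr_def evr by (simp add: divide_inverse)
      thus ?thesis unfolding eq using True pr(3) by auto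
    next
      case False
      hence "ev a b c u r = 0 \<or> ev a b c u s = 0" for u unfolding ev_def by auto
      hence "Pr a b c u r s = 0" for u unfolding Pr_def by (metis mult_eq_0_iff of_int_0)
      thus ?thesis unfolding eq using False by auto
    qed
  qed
qed

end



definition cx :: "(nat \<Rightarrow> nat \<Rightarrow> real) \<Rightarrow> nat \<Rightarrow> nat \<Rightarrow> complex" where
  "cx X = (\<lambda>i j. complex_of_real (X i j))"

lemma mm_cx: "mm n (cx X) (cx Y) = cx (mmr n X Y)"
  unfolding mm_def mmr_def cx_def by (simp add: fun_eq_iff)

locale fin = iso A B n g + plumb F Fmor \<eta> B x
  for A :: "'a cstar" and B :: "'u cstar" and n g
  and F :: "'u cstar \<Rightarrow> 'v set" and Fmor \<eta> x
begin

lemma dec_val: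
  assumes gd: "good_dec n Q"
  shows "\<exists>!i. i < n \<and> val (Phi (cx (Q i)))"
proof (rule decomp)
  have sy: "\<And>i r s. i < n \<Longrightarrow> r < n \<Longrightarrow> s < n \<Longrightarrow> Q i s r = Q i r s"
    and or: "\<And>i j r s. i < n \<Longrightarrow> j < n \<Longrightarrow> i \<noteq> j \<Longrightarrow> r < n \<Longrightarrow> s < n \<Longrightarrow> mmr n (Q i) (Q j) r s = 0"
    and su: "\<And>r s. r < n \<Longrightarrow> s < n \<Longrightarrow> (\<Sum>i<n. Q i r s) = (if r = s then 1 else 0)"
    using gd unfolding good_dec_def by auto
  show "Phi (cx (Q i)) \<in> ca_carrier B" for i by (rule Phi_in)
  show "ca_star B (Phi (cx (Q i))) = Phi (cx (Q i))" if i: "i < n" for i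
    unfolding Phi_star by (rule Phi_cong) (simp add: cx_def sy[OF i])
  show "ca_mul B (Phi (cx (Q i))) (Phi (cx (Q j))) = ca_zero B" if "i < n" "j < n" "i \<noteq> j" for i j
    unfolding Phi_mul Phi_zero[symmetric] mm_cx by (rule Phi_cong) (simp add: cx_def or that)
  show "ca_sum B (\<lambda>i. Phi (cx (Q i))) n = ca_one B"
    unfolding Phi_sum Phi_one[symmetric] by (rule Phi_cong) (simp add: cx_def su flip: of_real_sum)
qed

lemma contra: "3 \<le> n \<Longrightarrow> False"
proof -
  assume n3: "3 \<le> n"
  obtain k where k: "k < n" "val (Phi (cx (Er k)))"
    and ku: "\<And>i. i < n \<Longrightarrow> val (Phi (cx (Er i))) \<Longrightarrow> i = k"
    using dec_val[OF Er_dec] by blast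
  define b where "b = (if k = 0 then 1 else (0::nat))"
  define c where "c = (if k = 0 \<or> k = 1 then 2 else (1::nat))"
  interpret t: abc n k b c
    by unfold_locales (use n3 k(1) in \<open>auto simp: b_def c_def\<close>)
  define V where "V u = val (Phi (cx (Pr k b c u)))" for u
  have "ex1 (V x) (V y) (V z)" if tok: "tri_ok x y z" for x y z
  proof -
    define W where "W i = val (Phi (cx (Qt k b c x y z i)))" for i
    have u: "\<exists>!i. i < n \<and> W i" unfolding W_def by (rule dec_val[OF t.Qt_dec[OF tok]])
    have Wk: "W k = V x" "W b = V y" "W c = V z"
      unfolding W_def V_def Qt_def using t.dist by auto
    have Wo: "\<not> W i" if "i < n" "i \<noteq> k" "i \<noteq> b" "i \<noteq> c" for i
    proof
      assume "W i"
      hence "val (Phi (cx (Er i)))" unfolding W_def Qt_def using that by simp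
      thus False using ku that by blast
    qed
    from u obtain i0 where i0: "i0 < n" "W i0" and un: "\<And>j. j < n \<Longrightarrow> W j \<Longrightarrow> j = i0" by blast
    have "i0 = k \<or> i0 = b \<or> i0 = c" using Wo i0 by blast
    thus ?thesis unfolding ex1_def Wk[symmetric] using i0 un t.lt t.dist by metis
  qed
  hence "\<forall>(x,y,z)\<in>set kst. ex1 (V x) (V y) (V z)" using kst_ok by auto
  thus False by (rule ks_unsat)
qed

end


theorem corollary5p9:
  fixes F :: "'u cstar \<Rightarrow> 'v set"
    and Fmor :: "('u \<Rightarrow> 'u) \<Rightarrow> 'u cstar \<Rightarrow> 'u cstar \<Rightarrow> 'v \<Rightarrow> 'v"
    and A :: "'a cstar" and B :: "'u cstar" and n :: nat
  assumes "contravariant_functor F Fmor"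
    and "\<exists>\<eta>. gelf_nat_iso F Fmor \<eta>"
    and "unital_cstar_algebra A"
    and "unital_cstar_algebra B"
    and "cstar_isomorphic B (mat_cstar A n)"
    and "n \<ge> 3"
  shows "F B = {}"
proof (rule ccontr)
  assume "F B \<noteq> {}"
  then obtain x where x: "x \<in> F B" by blast
  from assms(2) obtain \<eta> where nat: "gelf_nat_iso F Fmor \<eta>" by blast
  from assms(5) obtain g where g: "cstar_hom B (mat_cstar A n) g"
    "bij_betw g (ca_carrier B) (ca_carrier (mat_cstar A n))"
    unfolding cstar_isomorphic_def by blast
  interpret fin A B n g F Fmor \<eta> x
    by (intro fin.intro iso.intro plumb.intro) (use assms g nat x in auto)
  show False using contra assms(6) by blast
qed

end
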